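(* Let $B$ be a (closed, filled) convex $n$-sided polygon in $D$ with $n\geq 2$ such that $\rho(\psi_B)$ is rational. Then $\psi_B$ is not conjugate to a rotation.
   Context: $D$ is the open unit disk in $\mathbb R^2$, $S^1$ its boundary circle identified with $\mathbb R/\mathbb Z$ via the counterclockwise normalized angle. For a closed convex $U\subset D$ and $v\in S^1$, $\psi_U(v)$ is the point $w\in S^1\setminus\{v\}$ such that the line $vw$ meets $U$ and $U$ lies in the closed half-plane to the left of the directed line from $v$ to $w$; it is an orientation-preserving homeomorphism of $S^1$. For such $f$, $\rho(f)=\lim_{n\to\infty}(\overline f^n(x)-x)/n$ with $\overline f$ the lift to $\mathbb R$ satisfying $\overline f(0)\in[0,1)$. "Conjugate to a rotation" means $h\circ\psi_B\circ h^{-1}$ is a rigid rotation of $S^1$ for some homeomorphism $h$ of $S^1$. *)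

theory Defs
  imports "HOL-Analysis.Analysis"
begin

text \<open>We model R^2 as the complex plane. D = ball 0 1, S^1 = sphere 0 1,
  identified with R/Z via t |-> exp(2 pi i t) (counterclockwise normalized angle).\<close>

definition circ :: "real \<Rightarrow> complex" where
  "circ t = cis (2 * pi * t)"

definition left_of :: "complex \<Rightarrow> complex \<Rightarrow> complex \<Rightarrow> bool" where
  "left_of v w z \<longleftrightarrow> Im (cnj (w - v) * (z - v)) \<ge> 0"

definition line_through :: "complex \<Rightarrow> complex \<Rightarrow> complex set" where
  "line_through v w = {v + t *\<^sub>R (w - v) | t. True}"

definition psi :: "complex set \<Rightarrow> complex \<Rightarrow> complex" where
  "psi U v = (THE w. w \<in> sphere 0 1 \<and> w \<noteq> v \<and> line_through v w \<inter> U \<noteq> {}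
                     \<and> (\<forall>z\<in>U. left_of v w z))"

definition circle_lift :: "(complex \<Rightarrow> complex) \<Rightarrow> real \<Rightarrow> real" where
  "circle_lift f = (THE F. continuous_on UNIV F \<and> (\<forall>x. f (circ x) = circ (F x))
                          \<and> 0 \<le> F 0 \<and> F 0 < 1)"

definition rot_number :: "(complex \<Rightarrow> complex) \<Rightarrow> real" where
  "rot_number f = lim (\<lambda>n. ((circle_lift f ^^ n) 0 - 0) / real n)"

definition conj_to_rotation :: "(complex \<Rightarrow> complex) \<Rightarrow> bool" where
  "conj_to_rotation f \<longleftrightarrow>
     (\<exists>h k (c::complex). homeomorphism (sphere 0 1) (sphere 0 1) h k \<and> norm c = 1 \<and>
        (\<forall>z\<in>sphere 0 1. h (f (k z)) = c * z))"

text \<open>B is a closed filled convex n-sided polygon in D: the convex hull of n points of D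
  in convex position (each an extreme point); n = 2 gives a segment.\<close>
definition convex_polygon :: "nat \<Rightarrow> complex set \<Rightarrow> bool" where
  "convex_polygon n B \<longleftrightarrow>
     (\<exists>P. finite P \<and> card P = n \<and> P \<subseteq> ball 0 1 \<and> B = convex hull P \<and>
          (\<forall>p\<in>P. p \<notin> convex hull (P - {p})))"

end

theory Submission
  imports Defs "HOL-Analysis.Analysis"
begin

definition Dn :: "complex \<Rightarrow> real \<Rightarrow> real" where
  "Dn p x = 1 - Re p * cos (2*pi*x) - Im p * sin (2*pi*x)"
definition Nm :: "complex \<Rightarrow> real \<Rightarrow> real" where
  "Nm p x = Re p * sin (2*pi*x) - Im p * cos (2*pi*x)"
definition Sf :: "complex \<Rightarrow> real \<Rightarrow> real" where
  "Sf p x = x + 1/2 + arctan (Nm p x / Dn p x) / pi"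
definition Sd :: "complex \<Rightarrow> real \<Rightarrow> real" where
  "Sd p x = (2 * Dn p x - (Dn p x)\<^sup>2 - (Nm p x)\<^sup>2) / ((Dn p x)\<^sup>2 + (Nm p x)\<^sup>2)"

lemma sq_rot: "(c::real)\<^sup>2 + d\<^sup>2 = 1 \<Longrightarrow> (a*c+b*d)\<^sup>2 + (a*d-b*c)\<^sup>2 = a\<^sup>2+b\<^sup>2"
proof -
  assume h: "c\<^sup>2 + d\<^sup>2 = 1"
  have "(a*c+b*d)\<^sup>2 + (a*d-b*c)\<^sup>2 = (a\<^sup>2+b\<^sup>2)*(c\<^sup>2 + d\<^sup>2)"
    by (simp add: power2_eq_square algebra_simps)
  thus ?thesis using h by simp
qed

lemma DN_norm: "(1 - Dn p x)\<^sup>2 + (Nm p x)\<^sup>2 = (cmod p)\<^sup>2"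
  unfolding Dn_def Nm_def cmod_power2
  using sq_rot[of "cos (2*pi*x)" "sin (2*pi*x)" "Re p" "Im p"] by simp

lemma Dn_pos: assumes "cmod p < 1" shows "Dn p x > 0"
proof -
  have n: "(cmod p)\<^sup>2 < 1" using assms by (simp add: power_less_one_iff)
  have "(1 - Dn p x)\<^sup>2 < 1" using DN_norm[of p x] n zero_le_power2[of "Nm p x"] by linarith
  have "1 - Dn p x < 1"
  proof (rule ccontr)
    assume "\<not> 1 - Dn p x < 1"
    hence "1 \<le> 1 - Dn p x" by simp
    hence "1 \<le> (1 - Dn p x)\<^sup>2" by (rule one_le_power)
    thus False using \<open>(1 - Dn p x)\<^sup>2 < 1\<close> by simp
  qed
  thus ?thesis by simp
qed

lemma Sd_pos: assumes "cmod p < 1" shows "Sd p x > 0"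
proof -
  have d: "Dn p x > 0" using Dn_pos[OF assms] .
  have "2 * Dn p x - (Dn p x)\<^sup>2 - (Nm p x)\<^sup>2 = 1 - (cmod p)\<^sup>2"
    using DN_norm[of p x] by (simp add: power2_eq_square algebra_simps)
  moreover have "(cmod p)\<^sup>2 < 1" using assms by (simp add: power_less_one_iff)
  moreover have "(Dn p x)\<^sup>2 + (Nm p x)\<^sup>2 > 0" using d by (simp add: add_pos_nonneg)
  ultimately show ?thesis unfolding Sd_def by simp
qed

lemma deriv_alg:
  fixes D N q :: real
  assumes d: "D > 0" and q: "q > 0"
  shows "1 + inverse (1 + (N / D)\<^sup>2) * (((2*q*(1 - D)) * D - N * (2*q*N)) / D\<^sup>2) / q
     = (2 * D - D\<^sup>2 - N\<^sup>2) / (D\<^sup>2 + N\<^sup>2)"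
proof -
  define H where "H = D\<^sup>2 + N\<^sup>2"
  define X where "X = 2 * ((1 - D) * D - N\<^sup>2)"
  have h: "H > 0" unfolding H_def using d by (simp add: add_pos_nonneg)
  have d2: "D\<^sup>2 > 0" using d by simp
  have i: "inverse (1 + (N / D)\<^sup>2) = D\<^sup>2 / H"
  proof -
    have "1 + (N / D)\<^sup>2 = H / D\<^sup>2" unfolding H_def using d2
      by (simp add: power_divide add_divide_distrib)
    thus ?thesis by simp
  qed
  have e: "((2*q*(1 - D)) * D - N * (2*q*N)) = q * X"
    unfolding X_def by (simp add: algebra_simps power2_eq_square)
  have "D\<^sup>2 / H * (q * X / D\<^sup>2) / q = X / H"
    using d2 q h by simp
  hence "1 + inverse (1 + (N / D)\<^sup>2) * (((2*q*(1 - D)) * D - N * (2*q*N)) / D\<^sup>2) / q = 1 + X / H"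
    unfolding i e by simp
  also have "\<dots> = (H + X) / H" using h by (simp add: field_simps)
  also have "H + X = 2 * D - D\<^sup>2 - N\<^sup>2" unfolding H_def X_def
    by (simp add: algebra_simps power2_eq_square)
  finally show ?thesis unfolding H_def .
qed

lemma Sf_deriv: assumes "cmod p < 1" shows "(Sf p has_real_derivative Sd p x) (at x)"
proof -
  have d: "Dn p x > 0" using Dn_pos[OF assms] .
  have dD: "((Dn p) has_real_derivative (2*pi*Nm p x)) (at x)"
    unfolding Dn_def[abs_def] Nm_def
    by (auto intro!: derivative_eq_intros simp: algebra_simps)
  have dN: "((Nm p) has_real_derivative (2*pi*(1 - Dn p x))) (at x)"
    unfolding Nm_def[abs_def] Dn_def
    by (auto intro!: derivative_eq_intros simp: algebra_simps)
  have q: "((\<lambda>y. Nm p y / Dn p y) has_real_derivative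
      ((2*pi*(1 - Dn p x)) * Dn p x - Nm p x * (2*pi*Nm p x)) / (Dn p x)\<^sup>2) (at x)"
    using DERIV_divide[OF dN dD] d by (simp add: power2_eq_square)
  have a: "((\<lambda>y. arctan (Nm p y / Dn p y)) has_real_derivative
      inverse (1 + (Nm p x / Dn p x)\<^sup>2) * (((2*pi*(1 - Dn p x)) * Dn p x - Nm p x * (2*pi*Nm p x)) / (Dn p x)\<^sup>2)) (at x)"
    using DERIV_chain2[OF DERIV_arctan q] by simp
  have s0: "((\<lambda>y. y + 1/2 + arctan (Nm p y / Dn p y) / pi) has_real_derivative 1 + 0 + inverse (1 + (Nm p x / Dn p x)\<^sup>2) * (((2*pi*(1 - Dn p x)) * Dn p x - Nm p x * (2*pi*Nm p x)) / (Dn p x)\<^sup>2) / pi) (at x)"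
    by (intro DERIV_add DERIV_cdivide a DERIV_ident DERIV_const)
  have s: "(Sf p has_real_derivative 1 + inverse (1 + (Nm p x / Dn p x)\<^sup>2) * (((2*pi*(1 - Dn p x)) * Dn p x - Nm p x * (2*pi*Nm p x)) / (Dn p x)\<^sup>2) / pi) (at x)"
    using s0 unfolding Sf_def[abs_def] by simp
  have "1 + inverse (1 + (Nm p x / Dn p x)\<^sup>2) * (((2*pi*(1 - Dn p x)) * Dn p x - Nm p x * (2*pi*Nm p x)) / (Dn p x)\<^sup>2) / pi = Sd p x"
    unfolding Sd_def by (rule deriv_alg[OF d pi_gt_zero])
  thus ?thesis using s by simp
qed

lemma circ_Re: "Re (circ y) = cos (2*pi*y)" and circ_Im: "Im (circ y) = sin (2*pi*y)"
  by (simp_all add: circ_def)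

lemma norm_circ[simp]: "cmod (circ y) = 1"
  by (simp add: circ_def)

lemma f_poly:
  fixes c d C S a b :: real
  shows "(c*C - d*S - c)*(b - d) - (d*C + c*S - d)*(a - c)
     = S*(1 - a*c - b*d) + (1 - C)*(a*d - b*c) + (c\<^sup>2 + d\<^sup>2 - 1) * S"
  by (simp add: algebra_simps power2_eq_square)

lemma f_formula:
  "Im (cnj (circ (x+t) - circ x) * (p - circ x))
     = sin (2*pi*t) * Dn p x + (1 - cos (2*pi*t)) * Nm p x"
proof -
  have e1: "cos (2*pi*(x+t)) = cos (2*pi*x) * cos (2*pi*t) - sin (2*pi*x) * sin (2*pi*t)"
    by (simp add: distrib_left cos_add)
  have e2: "sin (2*pi*(x+t)) = sin (2*pi*x) * cos (2*pi*t) + cos (2*pi*x) * sin (2*pi*t)"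
    by (simp add: distrib_left sin_add)
  have "Im (cnj (circ (x+t) - circ x) * (p - circ x))
      = (cos (2*pi*(x+t)) - cos (2*pi*x)) * (Im p - sin (2*pi*x))
        - (sin (2*pi*(x+t)) - sin (2*pi*x)) * (Re p - cos (2*pi*x))"
    by (simp add: circ_Re circ_Im algebra_simps)
  also have "\<dots> = sin (2*pi*t) * Dn p x + (1 - cos (2*pi*t)) * Nm p x"
    unfolding e1 e2 f_poly Dn_def Nm_def by simp
  finally show ?thesis .
qed

lemma f_factor:
  assumes "cmod p < 1"
  shows "sin (2*pi*t) * Dn p x + (1 - cos (2*pi*t)) * Nm p x
     = 2 * sin (pi*t) * Dn p x * cos (pi*t - arctan (Nm p x / Dn p x)) / cos (arctan (Nm p x / Dn p x))"
proof -
  define D where "D = Dn p x"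
  define N where "N = Nm p x"
  define b where "b = arctan (N / D)"
  have d: "D > 0" unfolding D_def using Dn_pos[OF assms] .
  have cb: "cos b > 0" unfolding b_def by (simp add: cos_arctan add_pos_nonneg)
  have "tan b = N / D" unfolding b_def by (rule tan_arctan)
  hence sb: "sin b = N / D * cos b" using cb by (simp add: tan_def field_simps)
  have s2: "sin (2*pi*t) = 2 * sin (pi*t) * cos (pi*t)"
    using sin_double[of "pi*t"] by (simp add: mult.assoc)
  have c2: "cos (2*pi*t) = 1 - 2 * (sin (pi*t))\<^sup>2"
    using cos_double_sin[of "pi*t"] by (simp add: mult.assoc)
  have "2 * sin (pi*t) * D * cos (pi*t - b) / cos b
      = 2 * sin (pi*t) * D * (cos (pi*t) * cos b + sin (pi*t) * (N / D * cos b)) / cos b"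
    by (simp add: cos_diff sb)
  also have "\<dots> = 2 * sin (pi*t) * cos (pi*t) * D + 2 * (sin (pi*t))\<^sup>2 * N"
    using cb d by (simp add: field_simps power2_eq_square)
  also have "\<dots> = sin (2*pi*t) * D + (1 - cos (2*pi*t)) * N"
    unfolding s2 c2 by simp
  finally show ?thesis unfolding D_def N_def b_def by simp
qed

lemma cos_sign_range:
  assumes "-pi/2 < y" "y < 3*pi/2"
  shows "(cos y > 0 \<longleftrightarrow> y < pi/2) \<and> (cos y = 0 \<longleftrightarrow> y = pi/2)"
proof (cases "y < pi/2")
  case True
  then show ?thesis using cos_gt_zero_pi[of y] assms by auto
next
  case False
  show ?thesis
  proof (cases "y = pi/2")
    case True then show ?thesis by (simp only: True cos_pi_half) simp
  next
    case ne: False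
    have "cos (y - pi) > 0" using cos_gt_zero_pi[of "y - pi"] assms False ne by auto
    moreover have "cos (y - pi) = - cos y" by (simp add: cos_diff)
    ultimately show ?thesis using False ne by auto
  qed
qed

definition fv :: "real \<Rightarrow> real \<Rightarrow> complex \<Rightarrow> real" where
  "fv x t p = Im (cnj (circ (x+t) - circ x) * (p - circ x))"

lemma f_sign:
  assumes p: "cmod p < 1" and t: "0 < t" "t < 1"
  shows "(fv x t p > 0 \<longleftrightarrow> x + t < Sf p x) \<and> (fv x t p = 0 \<longleftrightarrow> x + t = Sf p x)"
proof -
  define b where "b = arctan (Nm p x / Dn p x)"
  define K where "K = 2 * sin (pi*t) * Dn p x / cos b"
  have d: "Dn p x > 0" using Dn_pos[OF p] .
  have cb: "cos b > 0" unfolding b_def by (simp add: cos_arctan add_pos_nonneg)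
  have st: "sin (pi*t) > 0" using t by (intro sin_gt_zero) auto
  have K: "K > 0" unfolding K_def using d cb st by simp
  have fe: "fv x t p = K * cos (pi*t - b)"
    unfolding fv_def f_formula f_factor[OF p] K_def b_def by simp
  have b1: "-pi/2 < b" "b < pi/2" unfolding b_def using arctan_lbound arctan_ubound by auto
  have pt: "0 < pi*t" "pi*t < pi" using t by auto
  have cs: "(cos (pi*t - b) > 0 \<longleftrightarrow> pi*t - b < pi/2) \<and> (cos (pi*t - b) = 0 \<longleftrightarrow> pi*t - b = pi/2)"
    by (rule cos_sign_range) (use b1 pt in linarith)+
  have e1: "x + t < Sf p x \<longleftrightarrow> pi*t - b < pi/2"
  proof -
    have "x + t < Sf p x \<longleftrightarrow> t < 1/2 + b/pi" unfolding Sf_def b_def by auto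
    also have "\<dots> \<longleftrightarrow> pi * t < pi * (1/2 + b/pi)" by simp
    also have "pi * (1/2 + b/pi) = pi/2 + b" by (simp add: field_simps)
    finally show ?thesis by linarith
  qed
  have e2: "x + t = Sf p x \<longleftrightarrow> pi*t - b = pi/2"
  proof -
    have "x + t = Sf p x \<longleftrightarrow> t = 1/2 + b/pi" unfolding Sf_def b_def by auto
    also have "\<dots> \<longleftrightarrow> pi * t = pi * (1/2 + b/pi)" by simp
    also have "pi * (1/2 + b/pi) = pi/2 + b" by (simp add: field_simps)
    finally show ?thesis by linarith
  qed
  show ?thesis unfolding fe e1 e2 using K cs
    by (simp add: zero_less_mult_iff)
qed

lemma circ_eq_iff: "circ y = circ z \<longleftrightarrow> (\<exists>n::int. y = z + of_int n)"
proof -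
  have "circ y = circ z \<longleftrightarrow> exp (\<i> * of_real (2*pi*y)) = exp (\<i> * of_real (2*pi*z))"
    by (simp add: circ_def cis_conv_exp)
  also have "\<dots> \<longleftrightarrow> (\<exists>n::int. \<i> * of_real (2*pi*y) = \<i> * of_real (2*pi*z) + of_int (2*n) * pi * \<i>)"
    by (rule exp_eq)
  also have "\<dots> \<longleftrightarrow> (\<exists>n::int. y = z + of_int n)"
  proof -
    have "\<i> * of_real (2*pi*y) = \<i> * of_real (2*pi*z) + of_int (2*n) * pi * \<i> \<longleftrightarrow> y = z + of_int n"
      for n :: int
    proof -
      have "\<i> * of_real (2*pi*y) = \<i> * of_real (2*pi*z) + of_int (2*n) * pi * \<i>
          \<longleftrightarrow> Im (\<i> * of_real (2*pi*y)) = Im (\<i> * of_real (2*pi*z) + of_int (2*n) * pi * \<i>)"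
        by (simp add: complex_eq_iff)
      also have "\<dots> \<longleftrightarrow> 2*pi*y = 2*pi*z + 2*pi * of_int n" by (simp add: algebra_simps)
      also have "\<dots> \<longleftrightarrow> 2*pi*y = 2*pi * (z + of_int n)" by (simp add: algebra_simps)
      also have "\<dots> \<longleftrightarrow> y = z + of_int n" by simp
      finally show ?thesis .
    qed
    thus ?thesis by simp
  qed
  finally show ?thesis .
qed

lemma circ_add_int: "circ (y + of_int n) = circ y"
  using circ_eq_iff by blast

lemma circ_surj: assumes "w \<in> sphere 0 1" shows "\<exists>y. w = circ y"
proof -
  have w0: "w \<noteq> 0" and nw: "cmod w = 1" using assms by auto
  have "cis (Arg w) = w" using cis_Arg[OF w0] nw by (simp add: sgn_div_norm)
  hence "circ (Arg w / (2*pi)) = w" by (simp add: circ_def)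
  thus ?thesis by metis
qed

lemma other_point:
  assumes "w \<in> sphere 0 1" "w \<noteq> circ x"
  shows "\<exists>t. 0 < t \<and> t < 1 \<and> w = circ (x + t)"
proof -
  obtain y where y: "w = circ y" using circ_surj[OF assms(1)] by blast
  define t where "t = frac (y - x)"
  have t01: "0 \<le> t" "t < 1" unfolding t_def by (auto simp: frac_lt_1)
  have e: "x + t = y + of_int (- \<lfloor>y - x\<rfloor>)" unfolding t_def frac_def by simp
  have wt: "w = circ (x + t)" unfolding e y by (rule circ_add_int[symmetric])
  have "t \<noteq> 0" using wt assms(2) by auto
  thus ?thesis using t01 wt by (intro exI[of _ t]) auto
qed

lemma circ_ne: assumes "0 < t" "t < 1" shows "circ (x + t) \<noteq> circ x"
proof
  assume "circ (x + t) = circ x"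
  then obtain n :: int where "x + t = x + of_int n" using circ_eq_iff by blast
  hence "t = of_int n" by simp
  hence "0 < n" "n < 1" using assms by simp_all
  thus False by simp
qed

lemma on_line_Im:
  assumes "z \<in> line_through v w"
  shows "Im (cnj (w - v) * (z - v)) = 0"
proof -
  obtain s :: real where "z = v + s *\<^sub>R (w - v)" using assms unfolding line_through_def by blast
  hence zv: "z - v = of_real s * (w - v)" by (simp add: scaleR_conv_of_real)
  have "cnj (w - v) * (z - v) = of_real s * ((w - v) * cnj (w - v))" unfolding zv by (simp only: ac_simps)
  also have "\<dots> = of_real (s * (cmod (w - v))\<^sup>2)" by (simp only: of_real_mult complex_norm_square)
  finally show ?thesis by simp
qed

lemma Im_zero_on_line:
  assumes "w \<noteq> v" "Im (cnj (w - v) * (z - v)) = 0"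
  shows "z \<in> line_through v w"
proof -
  define d where "d = w - v"
  define r where "r = Re (cnj d * (z - v))"
  have d0: "d \<noteq> 0" using assms(1) unfolding d_def by simp
  have e: "cnj d * (z - v) = of_real r" using assms(2) unfolding r_def d_def
    by (simp add: complex_eq_iff)
  have "(d * cnj d) * (z - v) = d * (cnj d * (z - v))" by (simp only: mult.assoc)
  also have "\<dots> = d * of_real r" by (simp only: e)
  finally have "of_real ((cmod d)\<^sup>2) * (z - v) = d * of_real r"
    by (simp only: complex_norm_square)
  hence "z - v = of_real (r / (cmod d)\<^sup>2) * d" using d0
    by (simp add: field_simps)
  hence "z = v + (r / (cmod d)\<^sup>2) *\<^sub>R (w - v)" unfolding d_def
    by (simp add: scaleR_conv_of_real algebra_simps)
  thus ?thesis unfolding line_through_def by blast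
qed

lemma convex_Im_ge: "convex {z. Im (c * (z - v)) \<ge> 0}"
proof (rule convexI)
  fix x y :: complex and u w :: real
  assume x: "x \<in> {z. Im (c * (z - v)) \<ge> 0}" and y: "y \<in> {z. Im (c * (z - v)) \<ge> 0}"
    and u: "0 \<le> u" "0 \<le> w" "u + w = 1"
  have vv: "v = of_real u * v + of_real w * v"
  proof -
    have "of_real u * v + of_real w * v = of_real (u + w) * v" by (simp add: distrib_right)
    thus ?thesis using u(3) by simp
  qed
  have "c * (u *\<^sub>R x + w *\<^sub>R y - v) = c * (of_real u * x + of_real w * y - (of_real u * v + of_real w * v))"
    using vv by (simp add: scaleR_conv_of_real)
  also have "\<dots> = of_real u * (c * (x - v)) + of_real w * (c * (y - v))"
    by (simp add: algebra_simps)
  finally have "Im (c * (u *\<^sub>R x + w *\<^sub>R y - v)) = u * Im (c * (x - v)) + w * Im (c * (y - v))" by simp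
  thus "u *\<^sub>R x + w *\<^sub>R y \<in> {z. Im (c * (z - v)) \<ge> 0}" using x y u by simp
qed

lemma convex_Im_gt: "convex {z. Im (c * (z - v)) > 0}"
proof (rule convexI)
  fix x y :: complex and u w :: real
  assume x: "x \<in> {z. Im (c * (z - v)) > 0}" and y: "y \<in> {z. Im (c * (z - v)) > 0}"
    and u: "0 \<le> u" "0 \<le> w" "u + w = 1"
  have vv: "v = of_real u * v + of_real w * v"
  proof -
    have "of_real u * v + of_real w * v = of_real (u + w) * v" by (simp add: distrib_right)
    thus ?thesis using u(3) by simp
  qed
  have "c * (u *\<^sub>R x + w *\<^sub>R y - v) = c * (of_real u * x + of_real w * y - (of_real u * v + of_real w * v))"
    using vv by (simp add: scaleR_conv_of_real)
  also have "\<dots> = of_real u * (c * (x - v)) + of_real w * (c * (y - v))"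
    by (simp add: algebra_simps)
  finally have e: "Im (c * (u *\<^sub>R x + w *\<^sub>R y - v)) = u * Im (c * (x - v)) + w * Im (c * (y - v))" by simp
  have "u * Im (c * (x - v)) + w * Im (c * (y - v)) > 0"
  proof (cases "u = 0")
    case True then show ?thesis using u y by simp
  next
    case False
    hence "u * Im (c * (x - v)) > 0" using u x by simp
    moreover have "w * Im (c * (y - v)) \<ge> 0" using u y by simp
    ultimately show ?thesis by linarith
  qed
  thus "u *\<^sub>R x + w *\<^sub>R y \<in> {z. Im (c * (z - v)) > 0}" using e by simp
qed

definition Fm :: "complex set \<Rightarrow> real \<Rightarrow> real" where
  "Fm P x = Min ((\<lambda>p. Sf p x) ` P)"

lemma Sf_range: assumes "cmod p < 1" shows "x < Sf p x" "Sf p x < x + 1"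
proof -
  have a: "-(pi/2) < arctan (Nm p x / Dn p x)" "arctan (Nm p x / Dn p x) < pi/2"
    using arctan_lbound arctan_ubound by auto
  have h1: "-(1/2) < arctan (Nm p x / Dn p x) / pi"
    using a(1) pi_gt_zero by (simp add: less_divide_eq)
  have h2: "arctan (Nm p x / Dn p x) / pi < 1/2"
    using a(2) pi_gt_zero by (simp add: divide_less_eq)
  show "x < Sf p x" unfolding Sf_def using h1 by linarith
  show "Sf p x < x + 1" unfolding Sf_def using h2 by linarith
qed

lemma Fm_le: "finite P \<Longrightarrow> p \<in> P \<Longrightarrow> Fm P x \<le> Sf p x"
  unfolding Fm_def by (rule Min_le) auto

lemma Fm_attained: assumes "finite P" "P \<noteq> {}" shows "\<exists>p\<in>P. Sf p x = Fm P x"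
proof -
  have "Min ((\<lambda>p. Sf p x) ` P) \<in> (\<lambda>p. Sf p x) ` P" using assms by (intro Min_in) auto
  then obtain p where "p \<in> P" "Min ((\<lambda>p. Sf p x) ` P) = Sf p x" by blast
  thus ?thesis unfolding Fm_def by metis
qed

lemma Fm_ge_iff: "finite P \<Longrightarrow> P \<noteq> {} \<Longrightarrow> y \<le> Fm P x \<longleftrightarrow> (\<forall>p\<in>P. y \<le> Sf p x)"
  unfolding Fm_def by (subst Min_ge_iff) auto

lemma Fm_range: assumes "finite P" "P \<noteq> {}" "P \<subseteq> ball 0 1"
  shows "x < Fm P x" "Fm P x < x + 1"
proof -
  obtain p where p: "p \<in> P" "Sf p x = Fm P x" using Fm_attained[OF assms(1,2)] by blast
  have "cmod p < 1" using p assms(3) by auto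
  thus "x < Fm P x" "Fm P x < x + 1" using Sf_range[of p x] p by auto
qed

lemma f_ge_iff: assumes "cmod p < 1" "0 < t" "t < 1"
  shows "fv x t p \<ge> 0 \<longleftrightarrow> x + t \<le> Sf p x"
  using f_sign[OF assms, of x] by (auto simp: less_le)

lemma psi_circ:
  assumes fin: "finite P" and ne: "P \<noteq> {}" and sub: "P \<subseteq> ball 0 1"
  shows "psi (convex hull P) (circ x) = circ (Fm P x)"
proof -
  define B where "B = convex hull P"
  define v where "v = circ x"
  define t0 where "t0 = Fm P x - x"
  have t0: "0 < t0" "t0 < 1" unfolding t0_def using Fm_range[OF fin ne sub, of x] by auto
  have nP: "\<And>p. p \<in> P \<Longrightarrow> cmod p < 1" using sub by auto
  obtain p0 where p0: "p0 \<in> P" "Sf p0 x = Fm P x" using Fm_attained[OF fin ne] by blast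
  have w0eq: "circ (x + t0) = circ (Fm P x)" unfolding t0_def by simp
  have prop0: "circ (x + t0) \<in> sphere 0 1 \<and> circ (x + t0) \<noteq> v \<and> line_through v (circ (x + t0)) \<inter> B \<noteq> {}
      \<and> (\<forall>z\<in>B. left_of v (circ (x + t0)) z)"
  proof (intro conjI)
    show "circ (x + t0) \<in> sphere 0 1" by simp
    show ne0: "circ (x + t0) \<noteq> v" unfolding v_def using circ_ne[OF t0] .
    have "fv x t0 p0 = 0" using f_sign[OF nP[OF p0(1)] t0, of x] p0(2) unfolding t0_def by simp
    hence "p0 \<in> line_through v (circ (x + t0))"
      using Im_zero_on_line[OF ne0] unfolding fv_def v_def by simp
    moreover have "p0 \<in> B" unfolding B_def using p0(1) by (rule hull_inc)
    ultimately show "line_through v (circ (x + t0)) \<inter> B \<noteq> {}" by blast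
    have "P \<subseteq> {z. Im (cnj (circ (x + t0) - v) * (z - v)) \<ge> 0}"
    proof
      fix p assume p: "p \<in> P"
      have "x + t0 \<le> Sf p x" unfolding t0_def using Fm_le[OF fin p] by simp
      hence "fv x t0 p \<ge> 0" using f_ge_iff[OF nP[OF p] t0] by simp
      thus "p \<in> {z. Im (cnj (circ (x + t0) - v) * (z - v)) \<ge> 0}" unfolding fv_def v_def by simp
    qed
    hence "B \<subseteq> {z. Im (cnj (circ (x + t0) - v) * (z - v)) \<ge> 0}"
      unfolding B_def by (rule hull_minimal) (rule convex_Im_ge)
    thus "\<forall>z\<in>B. left_of v (circ (x + t0)) z" unfolding left_of_def by auto
  qed
  have uniq: "w = circ (x + t0)" if w: "w \<in> sphere 0 1 \<and> w \<noteq> v \<and> line_through v w \<inter> B \<noteq> {}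
      \<and> (\<forall>z\<in>B. left_of v w z)" for w
  proof -
    obtain t where t: "0 < t" "t < 1" "w = circ (x + t)" using other_point[of w x] w unfolding v_def by auto
    have le: "x + t \<le> Sf p x" if p: "p \<in> P" for p
    proof -
      have "p \<in> B" unfolding B_def using p by (rule hull_inc)
      hence "left_of v w p" using w by auto
      hence "fv x t p \<ge> 0" unfolding left_of_def fv_def v_def t(3) by simp
      thus ?thesis using f_ge_iff[OF nP[OF p] t(1,2)] by simp
    qed
    hence le2: "x + t \<le> Fm P x" using Fm_ge_iff[OF fin ne] by auto
    have "\<not> x + t < Fm P x"
    proof
      assume lt: "x + t < Fm P x"
      have "P \<subseteq> {z. Im (cnj (w - v) * (z - v)) > 0}"
      proof
        fix p assume p: "p \<in> P"
        have "x + t < Sf p x" using lt Fm_le[OF fin p, of x] by linarith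
        hence "fv x t p > 0" using f_sign[OF nP[OF p] t(1,2), of x] by simp
        thus "p \<in> {z. Im (cnj (w - v) * (z - v)) > 0}" unfolding fv_def v_def t(3) by simp
      qed
      hence "B \<subseteq> {z. Im (cnj (w - v) * (z - v)) > 0}"
        unfolding B_def by (rule hull_minimal) (rule convex_Im_gt)
      moreover obtain z where "z \<in> line_through v w" "z \<in> B" using w by blast
      ultimately show False using on_line_Im[of z v w] by auto
    qed
    hence "x + t = x + t0" using le2 unfolding t0_def by simp
    thus ?thesis using t(3) by simp
  qed
  have "psi B v = circ (x + t0)"
    unfolding psi_def by (rule the_equality) (use prop0 uniq in blast)+
  thus ?thesis unfolding B_def v_def w0eq .
qed

lemma int_valued_const:
  fixes h :: "real \<Rightarrow> real"
  assumes c: "continuous_on UNIV h" and i: "\<And>x. h x \<in> \<int>"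
  shows "h x = h 0"
proof -
  have "h constant_on UNIV"
  proof (rule continuous_discrete_range_constant[OF connected_UNIV c])
    fix x :: real assume "x \<in> UNIV"
    show "\<exists>e>0. \<forall>y. y \<in> UNIV \<and> h y \<noteq> h x \<longrightarrow> e \<le> norm (h y - h x)"
    proof (intro exI[of _ 1] conjI allI impI)
      fix y assume "y \<in> UNIV \<and> h y \<noteq> h x"
      moreover have "h y - h x \<in> \<int>" using i by (simp add: Ints_diff)
      ultimately show "1 \<le> norm (h y - h x)"
      proof -
        obtain k :: int where k: "h y - h x = of_int k" using \<open>h y - h x \<in> \<int>\<close> by (auto elim: Ints_cases)
        have "k \<noteq> 0" using k \<open>y \<in> UNIV \<and> h y \<noteq> h x\<close> by auto
        hence "1 \<le> \<bar>k\<bar>" by simp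
        hence "1 \<le> \<bar>of_int k :: real\<bar>" by (metis of_int_1_le_iff of_int_abs)
        thus ?thesis using k by simp
      qed
    qed simp
  qed
  thus ?thesis unfolding constant_on_def by auto
qed

lemma circ_eq_Ints: "circ y = circ z \<longleftrightarrow> y - z \<in> \<int>"
proof
  assume "circ y = circ z"
  then obtain n :: int where "y = z + of_int n" using circ_eq_iff by blast
  thus "y - z \<in> \<int>" by simp
next
  assume "y - z \<in> \<int>"
  then obtain n :: int where "y - z = of_int n" by (auto elim: Ints_cases)
  hence "y = z + of_int n" by simp
  thus "circ y = circ z" using circ_eq_iff by blast
qed

lemma circle_lift_eq:
  assumes c: "continuous_on UNIV F" and l: "\<And>x. f (circ x) = circ (F x)" and r: "0 \<le> F 0" "F 0 < 1"
  shows "circle_lift f = F"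
  unfolding circle_lift_def
proof (rule the_equality)
  show "continuous_on UNIV F \<and> (\<forall>x. f (circ x) = circ (F x)) \<and> 0 \<le> F 0 \<and> F 0 < 1"
    using assms by auto
next
  fix G assume G: "continuous_on UNIV G \<and> (\<forall>x. f (circ x) = circ (G x)) \<and> 0 \<le> G 0 \<and> G 0 < 1"
  have i: "G x - F x \<in> \<int>" for x using G l circ_eq_Ints by metis
  have cc: "continuous_on UNIV (\<lambda>x. G x - F x)" using G c by (intro continuous_on_diff) auto
  have k: "G x - F x = G 0 - F 0" for x using int_valued_const[OF cc, of x] i by simp
  have "G 0 - F 0 \<in> \<int>" using i by simp
  moreover have "\<bar>G 0 - F 0\<bar> < 1" using G r by auto
  ultimately have "G 0 - F 0 = 0"
  proof -
    obtain k :: int where k: "G 0 - F 0 = of_int k" using \<open>G 0 - F 0 \<in> \<int>\<close> by (auto elim: Ints_cases)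
    have "\<bar>of_int k :: real\<bar> < 1" using k \<open>\<bar>G 0 - F 0\<bar> < 1\<close> by simp
    hence "\<bar>k\<bar> < 1" by (metis of_int_abs of_int_less_1_iff)
    hence "k = 0" by simp
    thus ?thesis using k by simp
  qed
  thus "G = F" using k by (intro ext) (metis eq_iff_diff_eq_0)
qed

lemma Sf_cont: "cmod p < 1 \<Longrightarrow> continuous_on UNIV (Sf p)"
  using Sf_deriv DERIV_isCont continuous_at_imp_continuous_on by blast

lemma cont_Min:
  fixes g :: "'p \<Rightarrow> real \<Rightarrow> real"
  assumes "finite A" "A \<noteq> {}" "\<And>p. p \<in> A \<Longrightarrow> continuous_on UNIV (g p)"
  shows "continuous_on UNIV (\<lambda>x. Min ((\<lambda>p. g p x) ` A))"
  using assms
proof (induction A rule: finite_ne_induct)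
  case (singleton a) thus ?case by simp
next
  case (insert a F)
  have e: "(\<lambda>x. Min ((\<lambda>p. g p x) ` insert a F)) = (\<lambda>x. min (g a x) (Min ((\<lambda>p. g p x) ` F)))"
    using insert.hyps by (auto simp: Min_insert)
  show ?case unfolding e using insert by (intro continuous_on_min) auto
qed

lemma Fm_cont: "finite P \<Longrightarrow> P \<noteq> {} \<Longrightarrow> P \<subseteq> ball 0 1 \<Longrightarrow> continuous_on UNIV (Fm P)"
  unfolding Fm_def[abs_def] by (rule cont_Min) (auto intro!: Sf_cont)

lemma Sf_periodic: "Sf p (x + 1) = Sf p x + 1"
proof -
  have c: "cos (2*pi*(x+1)) = cos (2*pi*x)" by (simp add: distrib_left cos_add)
  have s: "sin (2*pi*(x+1)) = sin (2*pi*x)" by (simp add: distrib_left sin_add)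
  show ?thesis unfolding Sf_def Dn_def Nm_def c s by simp
qed

lemma Fm_periodic: assumes "finite P" "P \<noteq> {}" shows "Fm P (x + 1) = Fm P x + 1"
proof -
  have "(\<lambda>p. Sf p (x+1)) ` P = (\<lambda>y. y + 1) ` ((\<lambda>p. Sf p x) ` P)"
    by (auto simp: Sf_periodic image_image)
  moreover have "mono (\<lambda>y::real. y + 1)" by (auto intro: monoI)
  ultimately show ?thesis unfolding Fm_def using mono_Min_commute[of "\<lambda>y::real. y + 1" "(\<lambda>p. Sf p x) ` P"] assms
    by simp
qed

lemma Sf_strict: assumes "cmod p < 1" "x < y" shows "Sf p x < Sf p y"
  using DERIV_pos_imp_increasing[OF assms(2)] Sf_deriv[OF assms(1)] Sd_pos[OF assms(1)] by blast

lemma Fm_strict: assumes "finite P" "P \<noteq> {}" "P \<subseteq> ball 0 1" "x < y" shows "Fm P x < Fm P y"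
proof -
  obtain p where p: "p \<in> P" "Sf p y = Fm P y" using Fm_attained[OF assms(1,2)] by blast
  have "cmod p < 1" using p assms(3) by auto
  hence "Sf p x < Sf p y" using Sf_strict assms(4) by blast
  thus ?thesis using Fm_le[OF assms(1) p(1), of x] p(2) by linarith
qed

lemma circle_lift_psi:
  assumes "finite P" "P \<noteq> {}" "P \<subseteq> ball 0 1"
  shows "circle_lift (psi (convex hull P)) = Fm P"
proof (rule circle_lift_eq)
  show "continuous_on UNIV (Fm P)" using Fm_cont assms .
  show "psi (convex hull P) (circ x) = circ (Fm P x)" for x using psi_circ assms .
  show "0 \<le> Fm P 0" "Fm P 0 < 1" using Fm_range[OF assms, of 0] by auto
qed

lemma per_nat:
  fixes F :: "real \<Rightarrow> real"
  assumes per: "\<And>x. F (x + 1) = F x + 1"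
  shows "F (x + real m) = F x + real m"
proof (induction m)
  case 0 then show ?case by simp
next
  case (Suc m)
  have "F (x + real (Suc m)) = F ((x + real m) + 1)" by (simp add: algebra_simps)
  also have "\<dots> = F x + real (Suc m)" using per Suc by simp
  finally show ?case .
qed

lemma per_int:
  fixes F :: "real \<Rightarrow> real"
  assumes per: "\<And>x. F (x + 1) = F x + 1"
  shows "F (x + of_int k) = F x + of_int k"
proof (cases "k \<ge> 0")
  case True
  define m where "m = nat k"
  have "k = int m" unfolding m_def using True by simp
  thus ?thesis using per_nat[of F, OF per, of x m] by simp
next
  case False
  define m where "m = nat (- k)"
  have m: "k = - int m" unfolding m_def using False by simp
  have "F (x - real m) + real m = F (x - real m + real m)" using per_nat[of F, OF per, of "x - real m" m] by simp
  thus ?thesis using m by simp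
qed

lemma funpow_per:
  fixes F :: "real \<Rightarrow> real"
  assumes per: "\<And>x. F (x + 1) = F x + 1"
  shows "(F ^^ n) (x + 1) = (F ^^ n) x + 1"
  by (induction n) (auto simp: per)

lemma funpow_mono:
  fixes F :: "real \<Rightarrow> real"
  assumes mono: "\<And>x y. x < y \<Longrightarrow> F x < F y"
  shows "x < y \<Longrightarrow> (F ^^ n) x < (F ^^ n) y"
  by (induction n) (auto simp: mono)

lemma funpow_mono_le:
  fixes F :: "real \<Rightarrow> real"
  assumes mono: "\<And>x y. x < y \<Longrightarrow> F x < F y"
  shows "x \<le> y \<Longrightarrow> (F ^^ n) x \<le> (F ^^ n) y"
  using funpow_mono[of F x y n, OF mono] by (cases "x = y") auto

lemma funpow_cont:
  fixes F :: "real \<Rightarrow> real"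
  assumes cont: "continuous_on UNIV F"
  shows "continuous_on UNIV (F ^^ n)"
proof (induction n)
  case 0 then show ?case by (simp add: continuous_on_id)
next
  case (Suc n)
  have "F ^^ Suc n = F \<circ> (F ^^ n)" by simp
  thus ?case using Suc cont by (simp add: continuous_on_compose2[OF cont Suc])
qed

lemma disp_bound:
  fixes F :: "real \<Rightarrow> real"
  assumes mono: "\<And>x y. x < y \<Longrightarrow> F x < F y" and per: "\<And>x. F (x + 1) = F x + 1"
  shows "\<bar>((F ^^ n) x - x) - ((F ^^ n) y - y)\<bar> < 1"
proof -
  define G where "G = F ^^ n"
  have Gp: "G (z + 1) = G z + 1" for z unfolding G_def by (rule funpow_per[of F, OF per])
  have Gi: "G (z + of_int k) = G z + of_int k" for z k using per_int[of G, OF Gp] .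
  have Gm: "z \<le> w \<Longrightarrow> G z \<le> G w" for z w unfolding G_def by (rule funpow_mono_le[of F, OF mono])
  define k where "k = \<lfloor>x - y\<rfloor>"
  define y' where "y' = y + of_int k"
  have y1: "y' \<le> x" "x < y' + 1" unfolding y'_def k_def by linarith+
  have "G y' \<le> G x" using Gm y1 by simp
  moreover have "G x \<le> G (y' + 1)" using Gm y1 by simp
  moreover have "G x \<noteq> G (y' + 1)"
    using funpow_mono[of F x "y' + 1" n, OF mono] y1 unfolding G_def by simp
  ultimately have g: "G y' \<le> G x" "G x < G y' + 1" using Gp by auto
  have "G y' - y' = G y - y" unfolding y'_def using Gi by simp
  thus ?thesis using g y1 unfolding G_def[symmetric] by linarith
qed

definition aseq :: "(real \<Rightarrow> real) \<Rightarrow> nat \<Rightarrow> real" where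
  "aseq F n = (F ^^ n) 0"

lemma aseq_add:
  fixes F :: "real \<Rightarrow> real"
  assumes mono: "\<And>x y. x < y \<Longrightarrow> F x < F y" and per: "\<And>x. F (x + 1) = F x + 1"
  shows "\<bar>aseq F (m + n) - aseq F m - aseq F n\<bar> < 1"
proof -
  have "aseq F (m + n) = (F ^^ m) (aseq F n)" unfolding aseq_def by (simp add: funpow_add)
  thus ?thesis using disp_bound[of F m "aseq F n" 0, OF mono per] unfolding aseq_def by simp
qed

lemma aseq_mult:
  fixes F :: "real \<Rightarrow> real"
  assumes mono: "\<And>x y. x < y \<Longrightarrow> F x < F y" and per: "\<And>x. F (x + 1) = F x + 1"
  shows "\<bar>aseq F (k * n) - real k * aseq F n\<bar> \<le> real k"
proof (induction k)
  case 0 then show ?case by (simp add: aseq_def)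
next
  case (Suc k)
  have h1: "\<bar>aseq F (n + k * n) - aseq F n - aseq F (k * n)\<bar> < 1" by (rule aseq_add[of F, OF mono per])
  have e: "Suc k * n = n + k * n" by simp
  define A where "A = aseq F (n + k * n)"
  define B where "B = aseq F (k * n)"
  define a where "a = aseq F n"
  have h1': "-1 < A - a - B" "A - a - B < 1" using h1 unfolding A_def B_def a_def abs_less_iff by linarith+
  have h2: "-real k \<le> B - real k * a" "B - real k * a \<le> real k" using Suc.IH unfolding B_def a_def abs_le_iff by linarith+
  have "A - (1 + real k) * a = (A - a - B) + (B - real k * a)" by (simp add: algebra_simps)
  hence "\<bar>A - (1 + real k) * a\<bar> \<le> 1 + real k" using h1' h2 unfolding abs_le_iff by linarith
  thus ?case unfolding e A_def a_def by simp
qed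

lemma aseq_cauchy_bound:
  fixes F :: "real \<Rightarrow> real"
  assumes mono: "\<And>x y. x < y \<Longrightarrow> F x < F y" and per: "\<And>x. F (x + 1) = F x + 1"
    and n: "n > 0" and m: "m > 0"
  shows "\<bar>aseq F n / n - aseq F m / m\<bar> \<le> 1 / n + 1 / m"
proof -
  have a: "\<bar>aseq F (m * n) - real m * aseq F n\<bar> \<le> real m" by (rule aseq_mult[of F, OF mono per])
  have b: "\<bar>aseq F (n * m) - real n * aseq F m\<bar> \<le> real n" by (rule aseq_mult[of F, OF mono per])
  define c where "c = aseq F (m * n)"
  have b': "\<bar>c - real n * aseq F m\<bar> \<le> real n" using b unfolding c_def by (simp add: mult.commute)
  have a': "\<bar>c - real m * aseq F n\<bar> \<le> real m" using a unfolding c_def .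
  have mn: "real m > 0" "real n > 0" using m n by auto
  have "\<bar>c / (real m * real n) - aseq F n / n\<bar> = \<bar>c - real m * aseq F n\<bar> / (real m * real n)"
    using mn by (simp add: field_simps abs_divide)
  also have "\<dots> \<le> real m / (real m * real n)" using a' mn by (intro divide_right_mono) auto
  also have "\<dots> = 1 / n" using mn by simp
  finally have 1: "\<bar>c / (real m * real n) - aseq F n / n\<bar> \<le> 1 / n" .
  have "\<bar>c / (real m * real n) - aseq F m / m\<bar> = \<bar>c - real n * aseq F m\<bar> / (real m * real n)"
    using mn by (simp add: field_simps abs_divide)
  also have "\<dots> \<le> real n / (real m * real n)" using b' mn by (intro divide_right_mono) auto
  also have "\<dots> = 1 / m" using mn by simp
  finally have 2: "\<bar>c / (real m * real n) - aseq F m / m\<bar> \<le> 1 / m" .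
  show ?thesis using 1 2 by linarith
qed

lemma aseq_conv:
  fixes F :: "real \<Rightarrow> real"
  assumes mono: "\<And>x y. x < y \<Longrightarrow> F x < F y" and per: "\<And>x. F (x + 1) = F x + 1"
  shows "(\<lambda>n. aseq F n / real n) \<longlonglongrightarrow> lim (\<lambda>n. aseq F n / real n)"
    and "\<And>n. n > 0 \<Longrightarrow> \<bar>aseq F n / real n - lim (\<lambda>n. aseq F n / real n)\<bar> \<le> 1 / real n"
proof -
  define b where "b = (\<lambda>n. aseq F n / real n)"
  have bb: "\<bar>b n - b m\<bar> \<le> 1 / real n + 1 / real m" if "n > 0" "m > 0" for n m
    unfolding b_def using aseq_cauchy_bound[of F n m, OF mono per] that by simp
  have "Cauchy b"
  proof (rule metric_CauchyI)
    fix e :: real assume e: "e > 0"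
    obtain N :: nat where N: "inverse (real (Suc N)) < e / 2" using reals_Archimedean[of "e/2"] e by auto
    show "\<exists>M. \<forall>m\<ge>M. \<forall>n\<ge>M. dist (b m) (b n) < e"
    proof (intro exI[of _ "Suc N"] allI impI)
      fix m n assume m: "Suc N \<le> m" and n: "Suc N \<le> n"
      have "1 / real m \<le> inverse (real (Suc N))" using m by (simp add: divide_simps)
      moreover have "1 / real n \<le> inverse (real (Suc N))" using n by (simp add: divide_simps)
      moreover have "\<bar>b m - b n\<bar> \<le> 1 / real m + 1 / real n" using bb[of m n] m n by simp
      ultimately show "dist (b m) (b n) < e" using N by (simp add: dist_real_def)
    qed
  qed
  hence conv: "b \<longlonglongrightarrow> lim b" using Cauchy_convergent_iff convergent_LIMSEQ_iff by blast
  thus "(\<lambda>n. aseq F n / real n) \<longlonglongrightarrow> lim (\<lambda>n. aseq F n / real n)" unfolding b_def .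
  fix n :: nat assume n: "n > 0"
  have t1: "(\<lambda>m. \<bar>b n - b m\<bar>) \<longlonglongrightarrow> \<bar>b n - lim b\<bar>"
    by (intro tendsto_intros conv)
  have t2: "(\<lambda>m. 1 / real n + 1 / real m) \<longlonglongrightarrow> 1 / real n + 0"
    by (intro tendsto_intros lim_1_over_n)
  have "\<bar>b n - lim b\<bar> \<le> 1 / real n + 0"
    by (rule LIMSEQ_le[OF t1 t2]) (use bb n in \<open>intro exI[of _ 1], auto\<close>)
  thus "\<bar>aseq F n / real n - lim (\<lambda>n. aseq F n / real n)\<bar> \<le> 1 / real n" unfolding b_def by simp
qed

lemma no_pos_disp:
  fixes F :: "real \<Rightarrow> real" and p :: int and q :: nat
  assumes mono: "\<And>x y. x < y \<Longrightarrow> F x < F y" and per: "\<And>x. F (x + 1) = F x + 1"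
    and q: "q > 0" and bnd: "\<And>n. n > 0 \<Longrightarrow> \<bar>aseq F n / real n - of_int p / real q\<bar> \<le> 1 / real n"
    and eps: "e > 0" and H: "\<And>x. (F ^^ q) x - x - of_int p \<ge> e"
  shows False
proof -
  have a: "aseq F (q * k) \<ge> real k * (of_int p + e)" for k
  proof (induction k)
    case 0 then show ?case by (simp add: aseq_def)
  next
    case (Suc k)
    have "aseq F (q * Suc k) = (F ^^ q) (aseq F (q * k))"
      unfolding aseq_def by (simp add: funpow_add mult_Suc_right)
    also have "\<dots> \<ge> aseq F (q * k) + of_int p + e" using H[of "aseq F (q * k)"] by linarith
    finally show ?case using Suc by (simp add: algebra_simps)
  qed
  obtain k :: nat where k: "inverse (real (Suc k)) < e" using reals_Archimedean[OF eps] by auto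
  define K where "K = Suc k"
  have K: "K > 0" "1 / real K < e" using k unfolding K_def by (auto simp: divide_inverse)
  have qK: "q * K > 0" using q K by simp
  have "\<bar>aseq F (q * K) / real (q * K) - of_int p / real q\<bar> \<le> 1 / real (q * K)" using bnd[OF qK] .
  moreover have "aseq F (q * K) / real (q * K) \<ge> (of_int p + e) / real q"
  proof -
    have "aseq F (q * K) \<ge> real K * (of_int p + e)" using a .
    hence "aseq F (q * K) / real (q * K) \<ge> real K * (of_int p + e) / real (q * K)"
      using qK by (intro divide_right_mono) auto
    also have "real K * (of_int p + e) / real (q * K) = (of_int p + e) / real q" using K q by simp
    finally show ?thesis .
  qed
  ultimately have "(of_int p + e) / real q - of_int p / real q \<le> 1 / real (q * K)"
    unfolding abs_le_iff by linarith
  moreover have "(of_int p + e) / real q - of_int p / real q = e / real q"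
    by (simp add: diff_divide_distrib[symmetric])
  ultimately have "e / real q \<le> 1 / (real q * real K)" by simp
  hence "e \<le> 1 / real K" using q K by (simp add: field_simps)
  thus False using K by linarith
qed

lemma no_neg_disp:
  fixes F :: "real \<Rightarrow> real" and p :: int and q :: nat
  assumes mono: "\<And>x y. x < y \<Longrightarrow> F x < F y" and per: "\<And>x. F (x + 1) = F x + 1"
    and q: "q > 0" and bnd: "\<And>n. n > 0 \<Longrightarrow> \<bar>aseq F n / real n - of_int p / real q\<bar> \<le> 1 / real n"
    and eps: "e > 0" and H: "\<And>x. (F ^^ q) x - x - of_int p \<le> - e"
  shows False
proof -
  have a: "aseq F (q * k) \<le> real k * (of_int p - e)" for k
  proof (induction k)
    case 0 then show ?case by (simp add: aseq_def)
  next
    case (Suc k)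
    have "aseq F (q * Suc k) = (F ^^ q) (aseq F (q * k))"
      unfolding aseq_def by (simp add: funpow_add mult_Suc_right)
    also have "\<dots> \<le> aseq F (q * k) + of_int p - e" using H[of "aseq F (q * k)"] by linarith
    finally show ?case using Suc by (simp add: algebra_simps)
  qed
  obtain k :: nat where k: "inverse (real (Suc k)) < e" using reals_Archimedean[OF eps] by auto
  define K where "K = Suc k"
  have K: "K > 0" "1 / real K < e" using k unfolding K_def by (auto simp: divide_inverse)
  have qK: "q * K > 0" using q K by simp
  have "\<bar>aseq F (q * K) / real (q * K) - of_int p / real q\<bar> \<le> 1 / real (q * K)" using bnd[OF qK] .
  moreover have "aseq F (q * K) / real (q * K) \<le> (of_int p - e) / real q"
  proof -
    have "aseq F (q * K) \<le> real K * (of_int p - e)" using a .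
    hence "aseq F (q * K) / real (q * K) \<le> real K * (of_int p - e) / real (q * K)"
      using qK by (intro divide_right_mono) auto
    also have "real K * (of_int p - e) / real (q * K) = (of_int p - e) / real q" using K q by simp
    finally show ?thesis .
  qed
  ultimately have "of_int p / real q - (of_int p - e) / real q \<le> 1 / real (q * K)"
    unfolding abs_le_iff by linarith
  moreover have "of_int p / real q - (of_int p - e) / real q = e / real q"
    by (simp add: diff_divide_distrib[symmetric])
  ultimately have "e / real q \<le> 1 / (real q * real K)" by simp
  hence "e \<le> 1 / real K" using q K by (simp add: field_simps)
  thus False using K by linarith
qed

lemma periodic_point:
  fixes F :: "real \<Rightarrow> real" and p :: int and q :: nat
  assumes mono: "\<And>x y. x < y \<Longrightarrow> F x < F y" and per: "\<And>x. F (x + 1) = F x + 1"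
    and cont: "continuous_on UNIV F"
    and q: "q > 0" and rho: "lim (\<lambda>n. aseq F n / real n) = of_int p / real q"
  shows "\<exists>x. (F ^^ q) x = x + of_int p"
proof (rule ccontr)
  assume nz: "\<not> (\<exists>x. (F ^^ q) x = x + of_int p)"
  define H where "H = (\<lambda>x. (F ^^ q) x - x - of_int p)"
  have Hc: "continuous_on UNIV H" unfolding H_def
    by (intro continuous_on_diff funpow_cont[OF cont] continuous_on_id continuous_on_const)
  have Hn: "H x \<noteq> 0" for x
  proof
    assume "H x = 0"
    hence "(F ^^ q) x = x + of_int p" unfolding H_def by simp
    thus False using nz by blast
  qed
  have Hp: "H (x + 1) = H x" for x unfolding H_def using funpow_per[of F q x, OF per] by simp
  have Hi: "H (x + of_int k) = H x" for x k
  proof -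
    have Kp: "\<And>y. H (y + 1) + (y + 1) = (H y + y) + 1" using Hp by simp
    have "H (x + of_int k) + (x + of_int k) = (H x + x) + of_int k"
      using per_int[of "\<lambda>y. H y + y" x k, OF Kp] by simp
    thus ?thesis by simp
  qed
  have Hfrac: "H x = H (frac x)" for x using Hi[of "frac x" "\<lfloor>x\<rfloor>"] by (simp add: frac_def)
  have bnd: "\<And>n. n > 0 \<Longrightarrow> \<bar>aseq F n / real n - of_int p / real q\<bar> \<le> 1 / real n"
    using aseq_conv(2)[of F, OF mono per] rho by simp
  have sgn: "(\<forall>x. H x > 0) \<or> (\<forall>x. H x < 0)"
  proof (rule ccontr)
    assume "\<not> ?thesis"
    then obtain a b where ab: "H a \<le> 0" "H b \<ge> 0" by (meson not_le)
    have "\<exists>z. H z = 0"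
    proof (cases "a \<le> b")
      case True
      then show ?thesis using IVT'[of H a 0 b] ab continuous_on_subset[OF Hc] by blast
    next
      case False
      then show ?thesis using IVT2'[of H a 0 b] ab continuous_on_subset[OF Hc] by fastforce
    qed
    thus False using Hn by blast
  qed
  have cpt: "compact {0..1::real}" "{0..1::real} \<noteq> {}" by auto
  have Hc01: "continuous_on {0..1} H" using continuous_on_subset[OF Hc] by blast
  have fr01: "frac x \<in> {0..1}" for x using frac_lt_1[of x] frac_ge_0[of x] by auto
  from sgn show False
  proof
    assume pos: "\<forall>x. H x > 0"
    obtain x0 where x0: "x0 \<in> {0..1}" "\<And>y. y \<in> {0..1} \<Longrightarrow> H x0 \<le> H y"
      using continuous_attains_inf[OF cpt Hc01] by blast
    have "H x \<ge> H x0" for x using x0(2)[OF fr01[of x]] Hfrac[of x] by simp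
    thus False using no_pos_disp[of F q p "H x0", OF mono per q bnd] pos unfolding H_def by auto
  next
    assume neg: "\<forall>x. H x < 0"
    obtain x0 where x0: "x0 \<in> {0..1}" "\<And>y. y \<in> {0..1} \<Longrightarrow> H y \<le> H x0"
      using continuous_attains_sup[OF cpt Hc01] by blast
    have "H x \<le> - (- H x0)" for x using x0(2)[OF fr01[of x]] Hfrac[of x] by simp
    thus False using no_neg_disp[of F q p "- H x0", OF mono per q bnd] neg unfolding H_def by auto
  qed
qed

definition Act :: "complex set \<Rightarrow> real \<Rightarrow> complex set" where
  "Act P x = {p \<in> P. Sf p x = Fm P x}"
definition Dr :: "complex set \<Rightarrow> real \<Rightarrow> real" where
  "Dr P x = Min ((\<lambda>p. Sd p x) ` Act P x)"
definition Dl :: "complex set \<Rightarrow> real \<Rightarrow> real" where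
  "Dl P x = Max ((\<lambda>p. Sd p x) ` Act P x)"

lemma Act_props:
  assumes "finite P" "P \<noteq> {}"
  shows "finite (Act P x)" "Act P x \<noteq> {}" "Act P x \<subseteq> P"
  using Fm_attained[OF assms, of x] assms unfolding Act_def by auto

lemma Sf_tendsto: "cmod p < 1 \<Longrightarrow> (Sf p \<longlongrightarrow> Sf p x) (at x)"
  using Sf_deriv DERIV_isCont isCont_def by blast

lemma Fm_local:
  assumes fin: "finite P" and ne: "P \<noteq> {}" and sub: "P \<subseteq> ball 0 1"
  shows "eventually (\<lambda>y. Fm P y = Min ((\<lambda>p. Sf p y) ` Act P x)) (at x)"
proof -
  define A where "A = Act P x"
  have A: "finite A" "A \<noteq> {}" "A \<subseteq> P" using Act_props[OF fin ne] unfolding A_def by auto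
  obtain q0 where q0: "q0 \<in> A" using A by blast
  have q0x: "Sf q0 x = Fm P x" using q0 unfolding A_def Act_def by auto
  have nq0: "cmod q0 < 1" using q0 A sub by auto
  have ev: "\<forall>p\<in>P - A. eventually (\<lambda>y. Sf q0 y < Sf p y) (at x)"
  proof
    fix p assume p: "p \<in> P - A"
    have np: "cmod p < 1" using p sub by auto
    have "Sf p x \<noteq> Fm P x" using p unfolding A_def Act_def by auto
    hence gt: "Sf p x - Sf q0 x > 0" using Fm_le[OF fin, of p x] p q0x by auto
    have "((\<lambda>y. Sf p y - Sf q0 y) \<longlongrightarrow> Sf p x - Sf q0 x) (at x)"
      by (intro tendsto_diff Sf_tendsto np nq0)
    from order_tendstoD(1)[OF this gt] show "eventually (\<lambda>y. Sf q0 y < Sf p y) (at x)" by simp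
  qed
  have fP: "finite (P - A)" using fin by simp
  from eventually_ball_finite[OF fP ev]
  have "eventually (\<lambda>y. \<forall>p\<in>P - A. Sf q0 y < Sf p y) (at x)" .
  thus ?thesis
  proof (rule eventually_mono)
    fix y assume H: "\<forall>p\<in>P - A. Sf q0 y < Sf p y"
    define M where "M = Min ((\<lambda>p. Sf p y) ` A)"
    have "M \<in> (\<lambda>p. Sf p y) ` A" unfolding M_def using A by (intro Min_in) auto
    then obtain r where r: "r \<in> A" "M = Sf r y" by blast
    have le1: "Fm P y \<le> M" using Fm_le[OF fin, of r y] r A by auto
    obtain r' where r': "r' \<in> P" "Sf r' y = Fm P y" using Fm_attained[OF fin ne] by blast
    have le2: "M \<le> Fm P y"
    proof (cases "r' \<in> A")
      case True
      then show ?thesis unfolding M_def using r' A by (metis Min_le finite_imageI image_eqI)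
    next
      case False
      hence "Sf q0 y < Sf r' y" using H r'(1) by blast
      moreover have "M \<le> Sf q0 y" unfolding M_def using q0 A by (intro Min_le) auto
      ultimately show ?thesis using r'(2) by linarith
    qed
    show "Fm P y = Min ((\<lambda>p. Sf p y) ` Act P x)" using le1 le2 unfolding M_def A_def by simp
  qed
qed

lemma Min_affine_pos:
  fixes g :: "'a \<Rightarrow> real"
  assumes "finite A" "A \<noteq> {}" "d > 0"
  shows "(Min (g ` A) - c) / d = Min ((\<lambda>p. (g p - c) / d) ` A)"
proof -
  have m: "mono (\<lambda>z. (z - c) / d)" using assms(3) by (auto intro!: monoI divide_right_mono)
  have "(\<lambda>z. (z - c) / d) (Min (g ` A)) = Min ((\<lambda>z. (z - c) / d) ` (g ` A))"
    using assms by (intro mono_Min_commute[OF m]) auto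
  thus ?thesis by (simp add: image_image)
qed

lemma Min_affine_neg:
  fixes g :: "'a \<Rightarrow> real"
  assumes "finite A" "A \<noteq> {}" "d < 0"
  shows "(Min (g ` A) - c) / d = Max ((\<lambda>p. (g p - c) / d) ` A)"
proof -
  have "Min (g ` A) \<in> g ` A" using assms by (intro Min_in) auto
  then obtain p0 where p0: "p0 \<in> A" "Min (g ` A) = g p0" by blast
  show ?thesis
  proof (rule Max_eqI[symmetric])
    show "finite ((\<lambda>p. (g p - c) / d) ` A)" using assms by simp
    show "(Min (g ` A) - c) / d \<in> (\<lambda>p. (g p - c) / d) ` A" using p0 by auto
    fix y assume "y \<in> (\<lambda>p. (g p - c) / d) ` A"
    then obtain p where p: "p \<in> A" "y = (g p - c) / d" by blast
    have "Min (g ` A) \<le> g p" using p assms by (intro Min_le) auto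
    hence "Min (g ` A) - c \<le> g p - c" by simp
    thus "y \<le> (Min (g ` A) - c) / d" using p assms(3) by (simp add: divide_right_mono_neg)
  qed
qed

lemma tendsto_Min_fin:
  fixes g :: "'a \<Rightarrow> 'b \<Rightarrow> real"
  assumes "finite A" "A \<noteq> {}" "\<And>p. p \<in> A \<Longrightarrow> (g p \<longlongrightarrow> L p) F"
  shows "((\<lambda>y. Min ((\<lambda>p. g p y) ` A)) \<longlongrightarrow> Min (L ` A)) F"
  using assms
proof (induction A rule: finite_ne_induct)
  case (singleton a) thus ?case by simp
next
  case (insert a B)
  have e: "(\<lambda>y. Min ((\<lambda>p. g p y) ` insert a B)) = (\<lambda>y. min (g a y) (Min ((\<lambda>p. g p y) ` B)))"
    using insert.hyps by (auto simp: Min_insert)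
  have e2: "Min (L ` insert a B) = min (L a) (Min (L ` B))" using insert.hyps by (simp add: Min_insert)
  show ?case unfolding e e2 using insert by (intro tendsto_min) auto
qed

lemma tendsto_Max_fin:
  fixes g :: "'a \<Rightarrow> 'b \<Rightarrow> real"
  assumes "finite A" "A \<noteq> {}" "\<And>p. p \<in> A \<Longrightarrow> (g p \<longlongrightarrow> L p) F"
  shows "((\<lambda>y. Max ((\<lambda>p. g p y) ` A)) \<longlongrightarrow> Max (L ` A)) F"
  using assms
proof (induction A rule: finite_ne_induct)
  case (singleton a) thus ?case by simp
next
  case (insert a B)
  have e: "(\<lambda>y. Max ((\<lambda>p. g p y) ` insert a B)) = (\<lambda>y. max (g a y) (Max ((\<lambda>p. g p y) ` B)))"
    using insert.hyps by (auto simp: Max_insert)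
  have e2: "Max (L ` insert a B) = max (L a) (Max (L ` B))" using insert.hyps by (simp add: Max_insert)
  show ?case unfolding e e2 using insert by (intro tendsto_max) auto
qed

lemma ev_within: "eventually P (at x) \<Longrightarrow> eventually P (at x within s)"
  by (rule filter_leD[OF at_le[OF subset_UNIV]]) simp

lemma Fm_right_deriv:
  assumes fin: "finite P" and ne: "P \<noteq> {}" and sub: "P \<subseteq> ball 0 1"
  shows "(Fm P has_real_derivative Dr P x) (at x within {x<..})"
  unfolding has_field_derivative_iff
proof -
  define A where "A = Act P x"
  have A: "finite A" "A \<noteq> {}" "A \<subseteq> P" using Act_props[OF fin ne] unfolding A_def by auto
  have Ax: "\<And>p. p \<in> A \<Longrightarrow> Sf p x = Fm P x" unfolding A_def Act_def by auto
  have lim: "((\<lambda>y. Min ((\<lambda>p. (Sf p y - Sf p x) / (y - x)) ` A)) \<longlongrightarrow> Min ((\<lambda>p. Sd p x) ` A)) (at x within {x<..})"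
  proof (rule tendsto_Min_fin[OF A(1,2)])
    fix p assume "p \<in> A"
    hence "cmod p < 1" using A sub by auto
    from has_field_derivative_at_within[OF Sf_deriv[OF this], of x "{x<..}"]
    show "((\<lambda>y. (Sf p y - Sf p x) / (y - x)) \<longlongrightarrow> Sd p x) (at x within {x<..})"
      unfolding has_field_derivative_iff .
  qed
  have ev1: "eventually (\<lambda>y. Fm P y = Min ((\<lambda>p. Sf p y) ` A)) (at x within {x<..})"
    unfolding A_def by (rule ev_within[OF Fm_local[OF fin ne sub]])
  have ev2: "eventually (\<lambda>y. y \<in> {x<..}) (at x within {x<..})" by (simp add: eventually_at_filter)
  have ev: "eventually (\<lambda>y. Min ((\<lambda>p. (Sf p y - Sf p x) / (y - x)) ` A) = (Fm P y - Fm P x) / (y - x)) (at x within {x<..})"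
    using ev1 ev2
  proof eventually_elim
    case (elim y)
    have "(Fm P y - Fm P x) / (y - x) = (Min ((\<lambda>p. Sf p y) ` A) - Fm P x) / (y - x)" using elim by simp
    also have "\<dots> = Min ((\<lambda>p. (Sf p y - Fm P x) / (y - x)) ` A)"
      using Min_affine_pos[OF A(1,2), of "y - x" "\<lambda>p. Sf p y" "Fm P x"] elim by simp
    also have "\<dots> = Min ((\<lambda>p. (Sf p y - Sf p x) / (y - x)) ` A)"
      by (intro arg_cong[where f = Min] image_cong) (auto simp: Ax)
    finally show ?case by simp
  qed
  show "((\<lambda>y. (Fm P y - Fm P x) / (y - x)) \<longlongrightarrow> Dr P x) (at x within {x<..})"
    using Lim_transform_eventually[OF lim ev] unfolding Dr_def A_def .
qed

lemma Fm_left_deriv: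
  assumes fin: "finite P" and ne: "P \<noteq> {}" and sub: "P \<subseteq> ball 0 1"
  shows "(Fm P has_real_derivative Dl P x) (at x within {..<x})"
  unfolding has_field_derivative_iff
proof -
  define A where "A = Act P x"
  have A: "finite A" "A \<noteq> {}" "A \<subseteq> P" using Act_props[OF fin ne] unfolding A_def by auto
  have Ax: "\<And>p. p \<in> A \<Longrightarrow> Sf p x = Fm P x" unfolding A_def Act_def by auto
  have lim: "((\<lambda>y. Max ((\<lambda>p. (Sf p y - Sf p x) / (y - x)) ` A)) \<longlongrightarrow> Max ((\<lambda>p. Sd p x) ` A)) (at x within {..<x})"
  proof (rule tendsto_Max_fin[OF A(1,2)])
    fix p assume "p \<in> A"
    hence "cmod p < 1" using A sub by auto
    from has_field_derivative_at_within[OF Sf_deriv[OF this], of x "{..<x}"]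
    show "((\<lambda>y. (Sf p y - Sf p x) / (y - x)) \<longlongrightarrow> Sd p x) (at x within {..<x})"
      unfolding has_field_derivative_iff .
  qed
  have ev1: "eventually (\<lambda>y. Fm P y = Min ((\<lambda>p. Sf p y) ` A)) (at x within {..<x})"
    unfolding A_def by (rule ev_within[OF Fm_local[OF fin ne sub]])
  have ev2: "eventually (\<lambda>y. y \<in> {..<x}) (at x within {..<x})" by (simp add: eventually_at_filter)
  have ev: "eventually (\<lambda>y. Max ((\<lambda>p. (Sf p y - Sf p x) / (y - x)) ` A) = (Fm P y - Fm P x) / (y - x)) (at x within {..<x})"
    using ev1 ev2
  proof eventually_elim
    case (elim y)
    have "(Fm P y - Fm P x) / (y - x) = (Min ((\<lambda>p. Sf p y) ` A) - Fm P x) / (y - x)" using elim by simp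
    also have "\<dots> = Max ((\<lambda>p. (Sf p y - Fm P x) / (y - x)) ` A)"
      using Min_affine_neg[OF A(1,2), of "y - x" "\<lambda>p. Sf p y" "Fm P x"] elim by simp
    also have "\<dots> = Max ((\<lambda>p. (Sf p y - Sf p x) / (y - x)) ` A)"
      by (intro arg_cong[where f = Max] image_cong) (auto simp: Ax)
    finally show ?case by simp
  qed
  show "((\<lambda>y. (Fm P y - Fm P x) / (y - x)) \<longlongrightarrow> Dl P x) (at x within {..<x})"
    using Lim_transform_eventually[OF lim ev] unfolding Dl_def A_def .
qed

lemma Dr_Dl:
  assumes fin: "finite P" and ne: "P \<noteq> {}" and sub: "P \<subseteq> ball 0 1"
  shows "0 < Dr P x" "Dr P x \<le> Dl P x"
proof -
  have A: "finite (Act P x)" "Act P x \<noteq> {}" "Act P x \<subseteq> P" using Act_props[OF fin ne] by auto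
  show "0 < Dr P x" unfolding Dr_def using A sub
    by (subst Min_gr_iff) (auto intro!: Sd_pos)
  obtain p where "p \<in> Act P x" using A by blast
  hence "Dr P x \<le> Sd p x" "Sd p x \<le> Dl P x" unfolding Dr_def Dl_def using A by auto
  thus "Dr P x \<le> Dl P x" by simp
qed

lemma Dr_Dl_strict:
  assumes fin: "finite P" and ne: "P \<noteq> {}"
    and p1: "p1 \<in> Act P x" and p2: "p2 \<in> Act P x" and d: "Sd p1 x \<noteq> Sd p2 x"
  shows "Dr P x < Dl P x"
proof -
  have A: "finite (Act P x)" using Act_props[OF fin ne] by auto
  have "Dr P x \<le> Sd p1 x" "Dr P x \<le> Sd p2 x" "Sd p1 x \<le> Dl P x" "Sd p2 x \<le> Dl P x"
    unfolding Dr_def Dl_def using A p1 p2 by auto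
  thus ?thesis using d by linarith
qed

lemma recover_p:
  "Re p = (1 - Dn p x) * cos (2*pi*x) + Nm p x * sin (2*pi*x)"
  "Im p = (1 - Dn p x) * sin (2*pi*x) - Nm p x * cos (2*pi*x)"
proof -
  define c where "c = cos (2*pi*x)"
  define s where "s = sin (2*pi*x)"
  have cs: "c\<^sup>2 + s\<^sup>2 = 1" unfolding c_def s_def by simp
  have "(1 - Dn p x) * c + Nm p x * s = Re p * (c\<^sup>2 + s\<^sup>2)"
    unfolding Dn_def Nm_def c_def[symmetric] s_def[symmetric] by (simp add: algebra_simps power2_eq_square)
  thus "Re p = (1 - Dn p x) * cos (2*pi*x) + Nm p x * sin (2*pi*x)" using cs unfolding c_def s_def by simp
  have "(1 - Dn p x) * s - Nm p x * c = Im p * (c\<^sup>2 + s\<^sup>2)"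
    unfolding Dn_def Nm_def c_def[symmetric] s_def[symmetric] by (simp add: algebra_simps power2_eq_square)
  thus "Im p = (1 - Dn p x) * sin (2*pi*x) - Nm p x * cos (2*pi*x)" using cs unfolding c_def s_def by simp
qed

lemma Sd_alt:
  assumes "cmod p < 1"
  shows "Sd p x = 2 / (Dn p x * (1 + (Nm p x / Dn p x)\<^sup>2)) - 1"
proof -
  have d: "Dn p x > 0" using Dn_pos[OF assms] .
  have h: "(Dn p x)\<^sup>2 + (Nm p x)\<^sup>2 > 0" using d by (simp add: add_pos_nonneg)
  have e: "Dn p x * (1 + (Nm p x / Dn p x)\<^sup>2) = ((Dn p x)\<^sup>2 + (Nm p x)\<^sup>2) / Dn p x"
    using d by (simp add: field_simps power2_eq_square)
  show ?thesis unfolding Sd_def e using d h by (simp add: field_simps power2_eq_square)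
qed

lemma Sd_inj:
  assumes n1: "cmod p1 < 1" and n2: "cmod p2 < 1"
    and s: "Sf p1 x = Sf p2 x" and d: "Sd p1 x = Sd p2 x"
  shows "p1 = p2"
proof -
  have d1: "Dn p1 x > 0" and d2: "Dn p2 x > 0" using Dn_pos n1 n2 by auto
  have "arctan (Nm p1 x / Dn p1 x) = arctan (Nm p2 x / Dn p2 x)" using s unfolding Sf_def by simp
  hence k: "Nm p1 x / Dn p1 x = Nm p2 x / Dn p2 x" by (metis tan_arctan)
  define k where "k = Nm p1 x / Dn p1 x"
  have kp: "1 + k\<^sup>2 > 0" by (simp add: add_pos_nonneg)
  have "2 / (Dn p1 x * (1 + k\<^sup>2)) = 2 / (Dn p2 x * (1 + k\<^sup>2))"
    using d Sd_alt[OF n1, of x] Sd_alt[OF n2, of x] k unfolding k_def by simp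
  hence "Dn p1 x * (1 + k\<^sup>2) = Dn p2 x * (1 + k\<^sup>2)" by (metis divide_cancel_left zero_neq_numeral)
  hence D: "Dn p1 x = Dn p2 x" using kp by simp
  have N: "Nm p1 x = Nm p2 x" using k D d1 by (simp add: field_simps)
  show ?thesis
    by (rule complex_eqI) (simp_all only: recover_p[of p1 x] recover_p[of p2 x] D N)
qed

lemma Im_collinear: "Im (cnj (of_real a * d) * (of_real b * d)) = 0"
proof -
  have "cnj (of_real a * d) * (of_real b * d) = of_real (a * b) * (d * cnj d)"
    by (simp add: algebra_simps)
  also have "\<dots> = of_real (a * b * (cmod d)\<^sup>2)" by (simp add: complex_norm_square[symmetric])
  finally show ?thesis by simp
qed

lemma cross_point:
  assumes p: "cmod p < 1" and q: "cmod q < 1" and pq: "p \<noteq> q"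
  shows "\<exists>x. Sf p x = Sf q x"
proof -
  define d where "d = q - p"
  have d0: "d \<noteq> 0" and nd: "cmod d > 0" using pq unfolding d_def by auto
  define g where "g = (\<lambda>s::real. cmod (p + of_real s * d))"
  have gc: "continuous_on UNIV g" unfolding g_def by (intro continuous_intros)
  define M where "M = 2 / cmod d"
  have M: "M > 0" unfolding M_def using nd by simp
  have gM: "g M \<ge> 1" "g (-M) \<ge> 1"
  proof -
    have Md: "M * cmod d = 2" unfolding M_def using nd by simp
    have "cmod (of_real M * d) = 2" using M Md by (simp add: norm_mult)
    moreover have "cmod (of_real (-M) * d) = 2" using M Md by (simp add: norm_mult)
    moreover have "cmod (of_real M * d) \<le> cmod (p + of_real M * d) + cmod p"
      by (metis add_diff_cancel_left' norm_triangle_ineq4 add.commute)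
    moreover have "cmod (of_real (-M) * d) \<le> cmod (p + of_real (-M) * d) + cmod p"
      by (metis add_diff_cancel_left' norm_triangle_ineq4 add.commute)
    ultimately show "g M \<ge> 1" "g (-M) \<ge> 1" unfolding g_def using p by linarith+
  qed
  have g0: "g 0 < 1" unfolding g_def using p by simp
  obtain s0 where s0: "0 \<le> s0" "s0 \<le> M" "g s0 = 1"
    using IVT'[of g 0 1 M] g0 gM M continuous_on_subset[OF gc] by fastforce
  obtain s1 where s1: "-M \<le> s1" "s1 \<le> 0" "g s1 = 1"
    using IVT2'[of g 0 1 "-M"] g0 gM M continuous_on_subset[OF gc] by fastforce
  have s0p: "s0 > 0" using s0 g0 by (cases "s0 = 0") auto
  have s1n: "s1 < 0" using s1 g0 by (cases "s1 = 0") auto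
  define v where "v = p + of_real s0 * d"
  define w where "w = p + of_real s1 * d"
  have vS: "v \<in> sphere 0 1" using s0 unfolding v_def g_def by simp
  have wS: "w \<in> sphere 0 1" using s1 unfolding w_def g_def by simp
  have vw: "w \<noteq> v"
  proof
    assume "w = v"
    hence "of_real (s1 - s0) * d = 0" unfolding v_def w_def by (simp add: algebra_simps)
    thus False using s0p s1n d0 by simp
  qed
  obtain x where x: "v = circ x" using circ_surj[OF vS] by blast
  obtain t where t: "0 < t" "t < 1" "w = circ (x + t)" using other_point[OF wS] vw x by blast
  have "fv x t p = Im (cnj (of_real (s1 - s0) * d) * (of_real (- s0) * d))"
  proof -
    have "circ (x + t) - circ x = w - v" using t(3) x by simp
    also have "w - v = of_real (s1 - s0) * d" unfolding v_def w_def by (simp add: algebra_simps)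
    finally have "circ (x + t) - circ x = of_real (s1 - s0) * d" .
    moreover have "p - circ x = of_real (- s0) * d" using x[symmetric] unfolding v_def by simp
    ultimately show ?thesis unfolding fv_def by simp
  qed
  hence fp: "fv x t p = 0" using Im_collinear by simp
  have "fv x t q = Im (cnj (of_real (s1 - s0) * d) * (of_real (1 - s0) * d))"
  proof -
    have "circ (x + t) - circ x = w - v" using t(3) x by simp
    also have "w - v = of_real (s1 - s0) * d" unfolding v_def w_def by (simp add: algebra_simps)
    finally have "circ (x + t) - circ x = of_real (s1 - s0) * d" .
    moreover have "q - circ x = of_real (1 - s0) * d" using x[symmetric] unfolding v_def d_def
      by (simp add: algebra_simps)
    ultimately show ?thesis unfolding fv_def by simp
  qed
  hence fq: "fv x t q = 0" using Im_collinear by simp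
  have "x + t = Sf p x" using f_sign[OF p t(1,2), of x] fp by simp
  moreover have "x + t = Sf q x" using f_sign[OF q t(1,2), of x] fq by simp
  ultimately have "Sf p x = Sf q x" by simp
  thus ?thesis by blast
qed

lemma two_active:
  assumes fin: "finite P" and sub: "P \<subseteq> ball 0 1" and c2: "card P \<ge> 2"
  shows "\<exists>x p1 p2. p1 \<noteq> p2 \<and> p1 \<in> Act P x \<and> p2 \<in> Act P x"
proof -
  have ne: "P \<noteq> {}" using c2 by auto
  obtain ps where ps: "ps \<in> Act P 0" using Act_props[OF fin ne, of 0] by blast
  have psP: "ps \<in> P" and ps0: "Sf ps 0 = Fm P 0" using ps unfolding Act_def by auto
  define Q where "Q = P - {ps}"
  have Qf: "finite Q" using fin unfolding Q_def by simp
  have Qne: "Q \<noteq> {}"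
  proof
    assume "Q = {}"
    hence "P \<subseteq> {ps}" unfolding Q_def by auto
    hence "card P \<le> 1" using card_mono[of "{ps}" P] by simp
    thus False using c2 by simp
  qed
  have Qs: "Q \<subseteq> ball 0 1" using sub unfolding Q_def by auto
  have nps: "cmod ps < 1" using psP sub by auto
  define phi where "phi = (\<lambda>y. Fm Q y - Sf ps y)"
  have phic: "continuous_on UNIV phi" unfolding phi_def
    by (intro continuous_on_diff Fm_cont[OF Qf Qne Qs] Sf_cont[OF nps])
  have phi0: "phi 0 \<ge> 0"
  proof -
    have "\<forall>q\<in>Q. Sf ps 0 \<le> Sf q 0" using ps0 Fm_le[OF fin] unfolding Q_def by auto
    hence "Sf ps 0 \<le> Fm Q 0" using Fm_ge_iff[OF Qf Qne] by blast
    thus ?thesis unfolding phi_def by simp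
  qed
  obtain q where q: "q \<in> Q" using Qne by blast
  have nq: "cmod q < 1" using q Qs by auto
  have qps: "q \<noteq> ps" using q unfolding Q_def by auto
  obtain x1 where x1: "Sf q x1 = Sf ps x1" using cross_point[OF nq nps qps] by blast
  have phi1: "phi x1 \<le> 0" unfolding phi_def using Fm_le[OF Qf q, of x1] x1 by simp
  obtain xi where xi: "phi xi = 0"
  proof (cases "0 \<le> x1")
    case True
    then show ?thesis using IVT2'[of phi x1 0 0] phi0 phi1 continuous_on_subset[OF phic] that by blast
  next
    case False
    then show ?thesis using IVT'[of phi x1 0 0] phi0 phi1 continuous_on_subset[OF phic] that by fastforce
  qed
  have e1: "Fm Q xi = Sf ps xi" using xi unfolding phi_def by simp
  obtain q' where q': "q' \<in> Q" "Sf q' xi = Fm Q xi" using Fm_attained[OF Qf Qne] by blast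
  have FP: "Fm P xi = Sf ps xi"
  proof (rule antisym)
    show "Fm P xi \<le> Sf ps xi" by (rule Fm_le[OF fin psP])
    have "\<forall>r\<in>P. Sf ps xi \<le> Sf r xi"
    proof
      fix r assume r: "r \<in> P"
      show "Sf ps xi \<le> Sf r xi"
      proof (cases "r = ps")
        case True then show ?thesis by simp
      next
        case False
        hence "r \<in> Q" using r unfolding Q_def by auto
        thus ?thesis using Fm_le[OF Qf, of r xi] e1 by simp
      qed
    qed
    thus "Sf ps xi \<le> Fm P xi" using Fm_ge_iff[OF fin ne] by blast
  qed
  have "ps \<in> Act P xi" using psP FP unfolding Act_def by auto
  moreover have "q' \<in> Act P xi" using q' FP e1 unfolding Act_def Q_def by auto
  moreover have "q' \<noteq> ps" using q' unfolding Q_def by auto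
  ultimately show ?thesis by blast
qed

lemma funpow_derivs:
  assumes fin: "finite P" and ne: "P \<noteq> {}" and sub: "P \<subseteq> ball 0 1"
  shows "\<exists>l r. ((Fm P ^^ n) has_real_derivative l) (at x within {..<x}) \<and>
               ((Fm P ^^ n) has_real_derivative r) (at x within {x<..}) \<and> 0 < r \<and> r \<le> l"
proof (induction n arbitrary: x)
  case 0
  show ?case by (intro exI[of _ 1]) (auto intro!: derivative_eq_intros)
next
  case (Suc n)
  define F where "F = Fm P"
  obtain l r where lr: "((F ^^ n) has_real_derivative l) (at (F x) within {..<F x})"
      "((F ^^ n) has_real_derivative r) (at (F x) within {F x<..})" "0 < r" "r \<le> l"
    using Suc.IH[of "F x"] unfolding F_def by blast
  have e: "F ^^ Suc n = (F ^^ n) \<circ> F" by (rule funpow_Suc_right)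
  have im1: "F ` {x<..} \<subseteq> {F x<..}" using Fm_strict[OF fin ne sub] unfolding F_def by auto
  have im2: "F ` {..<x} \<subseteq> {..<F x}" using Fm_strict[OF fin ne sub] unfolding F_def by auto
  have R: "((F ^^ Suc n) has_real_derivative r * Dr P x) (at x within {x<..})"
    unfolding e
    by (rule DERIV_image_chain[OF DERIV_subset[OF lr(2) im1]]) (use Fm_right_deriv[OF fin ne sub] F_def in simp)
  have L: "((F ^^ Suc n) has_real_derivative l * Dl P x) (at x within {..<x})"
    unfolding e
    by (rule DERIV_image_chain[OF DERIV_subset[OF lr(1) im2]]) (use Fm_left_deriv[OF fin ne sub] F_def in simp)
  have D: "0 < Dr P x" "Dr P x \<le> Dl P x" using Dr_Dl[OF fin ne sub] by auto
  have "r * Dr P x \<le> l * Dl P x" using lr D by (intro mult_mono) auto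
  moreover have "0 < r * Dr P x" using lr D by simp
  ultimately show ?case using R L unfolding F_def by blast
qed

lemma funpow_derivs_strict:
  assumes fin: "finite P" and ne: "P \<noteq> {}" and sub: "P \<subseteq> ball 0 1"
    and lt: "Dr P x < Dl P x"
  shows "\<exists>l r. ((Fm P ^^ Suc n) has_real_derivative l) (at x within {..<x}) \<and>
               ((Fm P ^^ Suc n) has_real_derivative r) (at x within {x<..}) \<and> r < l"
proof -
  define F where "F = Fm P"
  obtain l r where lr: "((F ^^ n) has_real_derivative l) (at (F x) within {..<F x})"
      "((F ^^ n) has_real_derivative r) (at (F x) within {F x<..})" "0 < r" "r \<le> l"
    using funpow_derivs[OF fin ne sub, of n "F x"] unfolding F_def by blast
  have e: "F ^^ Suc n = (F ^^ n) \<circ> F" by (rule funpow_Suc_right)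
  have im1: "F ` {x<..} \<subseteq> {F x<..}" using Fm_strict[OF fin ne sub] unfolding F_def by auto
  have im2: "F ` {..<x} \<subseteq> {..<F x}" using Fm_strict[OF fin ne sub] unfolding F_def by auto
  have R: "((F ^^ Suc n) has_real_derivative r * Dr P x) (at x within {x<..})"
    unfolding e
    by (rule DERIV_image_chain[OF DERIV_subset[OF lr(2) im1]]) (use Fm_right_deriv[OF fin ne sub] F_def in simp)
  have L: "((F ^^ Suc n) has_real_derivative l * Dl P x) (at x within {..<x})"
    unfolding e
    by (rule DERIV_image_chain[OF DERIV_subset[OF lr(1) im2]]) (use Fm_left_deriv[OF fin ne sub] F_def in simp)
  have D: "0 < Dr P x" using Dr_Dl[OF fin ne sub] by auto
  have "r * Dr P x < r * Dl P x" using lr(3) lt by simp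
  also have "\<dots> \<le> l * Dl P x" using lr D lt by (intro mult_right_mono) auto
  finally show ?thesis using R L unfolding F_def by blast
qed

lemma deriv_unique_right:
  assumes "(f has_real_derivative a) (at x within {x<..})" "(f has_real_derivative b) (at x within {x<..})"
  shows "a = b"
  using assms unfolding has_field_derivative_iff
  by (rule tendsto_unique[rotated]) simp

lemma deriv_unique_left:
  assumes "(f has_real_derivative a) (at x within {..<x})" "(f has_real_derivative b) (at x within {..<x})"
  shows "a = b"
  using assms unfolding has_field_derivative_iff
  by (rule tendsto_unique[rotated]) simp

lemma no_translation_power:
  assumes fin: "finite P" and sub: "P \<subseteq> ball 0 1" and c2: "card P \<ge> 2"
    and q: "q > 0" and tr: "\<And>x. (Fm P ^^ q) x = x + c"
  shows False
proof -
  have ne: "P \<noteq> {}" using c2 by auto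
  obtain xi p1 p2 where pp: "p1 \<noteq> p2" "p1 \<in> Act P xi" "p2 \<in> Act P xi"
    using two_active[OF fin sub c2] by blast
  have n1: "cmod p1 < 1" "cmod p2 < 1" using pp sub Act_props[OF fin ne, of xi] by auto
  have "Sf p1 xi = Sf p2 xi" using pp unfolding Act_def by auto
  hence "Sd p1 xi \<noteq> Sd p2 xi" using Sd_inj[OF n1] pp(1) by blast
  hence lt: "Dr P xi < Dl P xi" using Dr_Dl_strict[OF fin ne pp(2,3)] by blast
  obtain n where qn: "q = Suc n" using q by (cases q) auto
  obtain l r where lr: "((Fm P ^^ q) has_real_derivative l) (at xi within {..<xi})"
      "((Fm P ^^ q) has_real_derivative r) (at xi within {xi<..})" "r < l"
    using funpow_derivs_strict[OF fin ne sub lt, of n] qn by blast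
  have fe: "Fm P ^^ q = (\<lambda>x. x + c)" using tr by (intro ext) simp
  have d1: "((\<lambda>x. x + c) has_real_derivative 1) (at xi within s)" for s
    by (auto intro!: derivative_eq_intros)
  have "l = 1" using deriv_unique_left[OF lr(1)[unfolded fe] d1] .
  moreover have "r = 1" using deriv_unique_right[OF lr(2)[unfolded fe] d1] .
  ultimately show False using lr(3) by simp
qed

lemma psi_funpow_circ:
  assumes "finite P" "P \<noteq> {}" "P \<subseteq> ball 0 1"
  shows "(psi (convex hull P) ^^ j) (circ x) = circ ((Fm P ^^ j) x)"
  by (induction j) (simp_all add: psi_circ[OF assms])

theorem lemma2p7:
  fixes B :: "complex set" and n :: nat
  assumes "n \<ge> 2" and "convex_polygon n B"
    and "rot_number (psi B) \<in> \<rat>"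
  shows "\<not> conj_to_rotation (psi B)"
proof
  assume conj: "conj_to_rotation (psi B)"
  obtain P where P: "finite P" "card P = n" "P \<subseteq> ball 0 1" "B = convex hull P"
    using assms(2) unfolding convex_polygon_def by blast
  have fin: "finite P" and sub: "P \<subseteq> ball 0 1" and c2: "card P \<ge> 2" using P assms(1) by auto
  have ne: "P \<noteq> {}" using c2 by auto
  define F where "F = Fm P"
  have mono: "\<And>x y. x < y \<Longrightarrow> F x < F y" unfolding F_def using Fm_strict[OF fin ne sub] by blast
  have per: "\<And>x. F (x + 1) = F x + 1" unfolding F_def using Fm_periodic[OF fin ne] by blast
  have cont: "continuous_on UNIV F" unfolding F_def using Fm_cont[OF fin ne sub] .
  have psic: "\<And>x. psi B (circ x) = circ (F x)" unfolding F_def P(4) using psi_circ[OF fin ne sub] by blast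
  have psij: "\<And>j x. (psi B ^^ j) (circ x) = circ ((F ^^ j) x)"
    unfolding F_def P(4) using psi_funpow_circ[OF fin ne sub] by blast
  have "rot_number (psi B) = lim (\<lambda>k. aseq F k / real k)"
    unfolding rot_number_def P(4) circle_lift_psi[OF fin ne sub] aseq_def F_def by simp
  then obtain a b :: int where ab: "b > 0" "lim (\<lambda>k. aseq F k / real k) = of_int a / of_int b"
    using assms(3) by (metis Rats_cases')
  define q where "q = nat b"
  have q: "q > 0" "real q = of_int b" unfolding q_def using ab by auto
  obtain x0 where x0: "(F ^^ q) x0 = x0 + of_int a"
    using periodic_point[of F q a, OF mono per cont q(1)] ab q by auto
  obtain h k and c :: complex where hk: "homeomorphism (sphere 0 1) (sphere 0 1) h k" and c: "norm c = 1"
    and rel: "\<And>z. z \<in> sphere 0 1 \<Longrightarrow> h (psi B (k z)) = c * z"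
    using conj unfolding conj_to_rotation_def by blast
  define S :: "complex set" where "S = sphere 0 1"
  have kh: "\<And>y. y \<in> S \<Longrightarrow> k (h y) = y" and hk': "\<And>y. y \<in> S \<Longrightarrow> h (k y) = y"
    and hS: "\<And>y. y \<in> S \<Longrightarrow> h y \<in> S" and kS: "\<And>y. y \<in> S \<Longrightarrow> k y \<in> S"
    using hk unfolding homeomorphism_def S_def by auto
  have psiS: "\<And>y. y \<in> S \<Longrightarrow> psi B y \<in> S"
  proof -
    fix y assume "y \<in> S"
    then obtain x where "y = circ x" using circ_surj unfolding S_def by blast
    thus "psi B y \<in> S" using psic unfolding S_def by simp
  qed
  have cS: "\<And>z j. z \<in> S \<Longrightarrow> c ^ j * z \<in> S" unfolding S_def using c by (simp add: norm_mult norm_power)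
  have psi1: "\<And>y. y \<in> S \<Longrightarrow> psi B y = k (c * h y)"
  proof -
    fix y assume y: "y \<in> S"
    have "h (psi B y) = c * h y" using rel[of "h y"] hS[OF y] kh[OF y] unfolding S_def by simp
    hence "k (h (psi B y)) = k (c * h y)" by simp
    thus "psi B y = k (c * h y)" using kh[OF psiS[OF y]] by simp
  qed
  have psin: "\<And>j y. y \<in> S \<Longrightarrow> (psi B ^^ j) y = k (c ^ j * h y)"
  proof -
    fix j y assume y: "y \<in> S"
    show "(psi B ^^ j) y = k (c ^ j * h y)"
    proof (induction j)
      case 0 then show ?case using kh[OF y] by simp
    next
      case (Suc j)
      have m: "k (c ^ j * h y) \<in> S" using kS[OF cS[OF hS[OF y]]] .
      have "(psi B ^^ Suc j) y = psi B (k (c ^ j * h y))" using Suc by simp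
      also have "\<dots> = k (c * h (k (c ^ j * h y)))" using psi1[OF m] .
      also have "\<dots> = k (c ^ Suc j * h y)" using hk'[OF cS[OF hS[OF y]]] by (simp add: mult.assoc)
      finally show ?case .
    qed
  qed
  define y0 where "y0 = circ x0"
  have y0S: "y0 \<in> S" unfolding y0_def S_def by simp
  have "(psi B ^^ q) y0 = y0" unfolding y0_def psij x0 by (rule circ_add_int)
  hence "k (c ^ q * h y0) = y0" using psin[OF y0S] by simp
  hence "h (k (c ^ q * h y0)) = h y0" by simp
  hence "c ^ q * h y0 = h y0" using hk'[OF cS[OF hS[OF y0S]]] by simp
  moreover have "h y0 \<noteq> 0" using hS[OF y0S] unfolding S_def by auto
  ultimately have cq: "c ^ q = 1" by simp
  have idq: "\<And>y. y \<in> S \<Longrightarrow> (psi B ^^ q) y = y" using psin kh cq by simp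
  have ints: "(F ^^ q) x - x \<in> \<int>" for x
  proof -
    have "circ ((F ^^ q) x) = circ x" using idq[of "circ x"] psij[of q x] unfolding S_def by simp
    thus ?thesis using circ_eq_Ints by blast
  qed
  have cq2: "continuous_on UNIV (\<lambda>x. (F ^^ q) x - x)"
    by (intro continuous_on_diff funpow_cont[OF cont] continuous_on_id)
  have "(F ^^ q) x = x + ((F ^^ q) 0 - 0)" for x
    using int_valued_const[OF cq2 ints, of x] by simp
  thus False using no_translation_power[OF fin sub c2 q(1)] unfolding F_def by blast
qed


end
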